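(* Let $L_1=L_1([0,1],\mu)$ with $\mu$ Lebesgue measure. The norm of $FBL[L_1]$ fails the Fatou property; that is, there is an upwards directed set $\mathcal F\subseteq FBL[L_1]_+$ having a supremum $y\in FBL[L_1]$ with $\sup\{\|x\|:x\in\mathcal F\}\ne\|y\|$.
   Context: For a real Banach space $E$ with dual $E^*$ and closed unit ball $B_E$, let $H[E]$ be the vector space of all positively homogeneous functions $f:E^*\to\mathbb R$ ($f(\lambda x^* )=\lambda f(x^* )$ for $\lambda>0$). For $f\in H[E]$ put $\|f\|_{FBL[E]}:=\sup\{\sum_{k=1}^n|f(x_k^* )| : n\in\mathbb N,\ x_1^*,\dots,x_n^*\in E^*,\ \sup_{x\in B_E}\sum_{k=1}^n|x_k^*(x)|\le 1\}$. $H_0[E]:=\{f\in H[E]:\|f\|_{FBL[E]}<\infty\}$ is a Banach lattice with this norm and pointwise order/operations. For $x\in E$ let $\delta_x(x^* )=x^*(x)$. $FBL[E]$ is the closed sublattice of $H_0[E]$ generated by $\{\delta_x:x\in E\}$. The norm of a Banach lattice $X$ has the Fatou property if whenever an upwards directed set $\mathcal F\subseteq X_+$ has a supremum $y$ in $X$, then $\sup\{\|x\|:x\in\mathcal F\}=\|y\|$. *)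

theory Defs
  imports "HOL-Analysis.Analysis"
begin

text \<open>Its elements are represented by the
  integrable functions on [0,1]; a.e.-equal representatives are identified implicitly, since
  every bounded functional takes equal values on them.\<close>

definition L1 :: "(real \<Rightarrow> real) set" where
  "L1 = {g. integrable (lebesgue_on {0..1}) g}"

definition L1norm :: "(real \<Rightarrow> real) \<Rightarrow> real" where
  "L1norm g = integral\<^sup>L (lebesgue_on {0..1}) (\<lambda>t. \<bar>g t\<bar>)"

definition L1dual :: "((real \<Rightarrow> real) \<Rightarrow> real) set" where
  "L1dual = {\<phi>. (\<forall>f\<in>L1. \<forall>g\<in>L1. \<phi> (\<lambda>t. f t + g t) = \<phi> f + \<phi> g)
               \<and> (\<forall>c. \<forall>f\<in>L1. \<phi> (\<lambda>t. c * f t) = c * \<phi> f)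
               \<and> (\<exists>C. \<forall>f\<in>L1. \<bar>\<phi> f\<bar> \<le> C * L1norm f)
               \<and> (\<forall>f. f \<notin> L1 \<longrightarrow> \<phi> f = 0)}"

type_synonym hfun = "((real \<Rightarrow> real) \<Rightarrow> real) \<Rightarrow> real"

definition extensional_dual :: "hfun \<Rightarrow> bool" where
  "extensional_dual f \<longleftrightarrow> (\<forall>\<phi>. \<phi> \<notin> L1dual \<longrightarrow> f \<phi> = 0)"

definition pos_homogeneous :: "hfun \<Rightarrow> bool" where
  "pos_homogeneous f \<longleftrightarrow> (\<forall>\<phi>\<in>L1dual. \<forall>r>0. f (\<lambda>x. r * \<phi> x) = r * f \<phi>)"

definition fbl_enorm :: "hfun \<Rightarrow> ereal" where
  "fbl_enorm f = (SUP p \<in> {(n, xs) | (n::nat) xs. (\<forall>k<n. xs k \<in> L1dual) \<and>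
        (\<forall>g\<in>L1. L1norm g \<le> 1 \<longrightarrow> (\<Sum>k<n. \<bar>xs k g\<bar>) \<le> 1)}.
      ereal (\<Sum>k<fst p. \<bar>f (snd p k)\<bar>))"

definition H0 :: "hfun set" where
  "H0 = {f. extensional_dual f \<and> pos_homogeneous f \<and> fbl_enorm f < \<infinity>}"

definition delta :: "(real \<Rightarrow> real) \<Rightarrow> hfun" where
  "delta x = (\<lambda>\<phi>. if \<phi> \<in> L1dual then \<phi> x else 0)"

inductive_set fbl_gen :: "hfun set" where
  base: "x \<in> L1 \<Longrightarrow> delta x \<in> fbl_gen"
| add: "f \<in> fbl_gen \<Longrightarrow> g \<in> fbl_gen \<Longrightarrow> (\<lambda>\<phi>. f \<phi> + g \<phi>) \<in> fbl_gen"
| smult: "f \<in> fbl_gen \<Longrightarrow> (\<lambda>\<phi>. c * f \<phi>) \<in> fbl_gen"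
| sup: "f \<in> fbl_gen \<Longrightarrow> g \<in> fbl_gen \<Longrightarrow> (\<lambda>\<phi>. max (f \<phi>) (g \<phi>)) \<in> fbl_gen"
| inf: "f \<in> fbl_gen \<Longrightarrow> g \<in> fbl_gen \<Longrightarrow> (\<lambda>\<phi>. min (f \<phi>) (g \<phi>)) \<in> fbl_gen"

definition FBL :: "hfun set" where
  "FBL = {f \<in> H0. \<forall>e>0. \<exists>g\<in>fbl_gen. fbl_enorm (\<lambda>\<phi>. f \<phi> - g \<phi>) < ereal e}"

definition fle :: "hfun \<Rightarrow> hfun \<Rightarrow> bool" where
  "fle f g \<longleftrightarrow> (\<forall>\<phi>\<in>L1dual. f \<phi> \<le> g \<phi>)"

definition is_sup_in_FBL :: "hfun set \<Rightarrow> hfun \<Rightarrow> bool" where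
  "is_sup_in_FBL F y \<longleftrightarrow> y \<in> FBL \<and> (\<forall>x\<in>F. fle x y) \<and>
     (\<forall>z\<in>FBL. (\<forall>x\<in>F. fle x z) \<longrightarrow> fle y z)"

end

theory Submission
  imports Defs
begin

definition dyad :: "nat \<Rightarrow> real \<Rightarrow> nat" where
  "dyad L t = min (nat \<lfloor>2^L * t\<rfloor>) (2^L - 1)"
definition chi :: "nat \<Rightarrow> nat \<Rightarrow> real \<Rightarrow> real" where
  "chi L j t = (if dyad L t = j then 1 else 0)"
definition rad :: "nat \<Rightarrow> real \<Rightarrow> real" where
  "rad m t = (if even (dyad (Suc m) t) then 1 else -1)"

lemma dyad_meas: "dyad L \<in> borel \<rightarrow>\<^sub>M count_space UNIV"
  unfolding dyad_def by measurable

lemma chi_meas_borel: "chi L j \<in> borel_measurable borel"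
  unfolding chi_def using dyad_meas by measurable

lemma rad_meas_borel: "rad m \<in> borel_measurable borel"
  unfolding rad_def using dyad_meas by measurable

lemma space_lo[simp]: "space (lebesgue_on {0..1::real}) = {0..1}"
  by simp

lemma borel_to_lo: "f \<in> borel_measurable borel \<Longrightarrow> (f::real\<Rightarrow>real) \<in> borel_measurable (lebesgue_on {0..1})"
  by (metis measurable_lborel2 measurable_restrict_space1 measurable_completion)

lemma fm_lo: "finite_measure (lebesgue_on {0..1::real})"
  by (metis cbox_interval finite_measure_lebesgue_on lmeasurable_cbox)

lemma L1_bdd: "f \<in> borel_measurable (lebesgue_on {0..1}) \<Longrightarrow> (\<And>t. t \<in> {0..1} \<Longrightarrow> \<bar>f t\<bar> \<le> B) \<Longrightarrow> f \<in> L1"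
proof -
  assume a: "f \<in> borel_measurable (lebesgue_on {0..1})" "\<And>t. t \<in> {0..1} \<Longrightarrow> \<bar>f t\<bar> \<le> B"
  have "AE x in lebesgue_on {0..1}. norm (f x) \<le> B" by (rule AE_I2) (use a in auto)
  then show ?thesis unfolding L1_def using finite_measure.integrable_const_bound[OF fm_lo, of f B] a by auto
qed

lemma L1_add: "f \<in> L1 \<Longrightarrow> g \<in> L1 \<Longrightarrow> (\<lambda>t. f t + g t) \<in> L1"
  unfolding L1_def by auto

lemma L1_scale: "f \<in> L1 \<Longrightarrow> (\<lambda>t. c * f t) \<in> L1"
  unfolding L1_def by auto

lemma L1_const: "(\<lambda>t. c) \<in> L1"
  unfolding L1_def using integrable_const_ivl by auto

lemma L1_chi: "chi L j \<in> L1"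
  by (rule L1_bdd[where B=1], rule borel_to_lo[OF chi_meas_borel], auto simp: chi_def)

lemma L1_rad: "rad m \<in> L1"
  by (rule L1_bdd[where B=1], rule borel_to_lo[OF rad_meas_borel], auto simp: rad_def)

lemma L1_mult_bdd: "f \<in> L1 \<Longrightarrow> w \<in> borel_measurable (lebesgue_on {0..1}) \<Longrightarrow> (\<And>t. t \<in> {0..1} \<Longrightarrow> \<bar>w t\<bar> \<le> B)
   \<Longrightarrow> (\<lambda>t. f t * w t) \<in> L1"
  unfolding L1_def
proof -
  assume f: "f \<in> {g. integrable (lebesgue_on {0..1}) g}" and w: "w \<in> borel_measurable (lebesgue_on {0..1})"
    and B: "\<And>t. t \<in> {0..1} \<Longrightarrow> \<bar>w t\<bar> \<le> B"
  have fi: "integrable (lebesgue_on {0..1}) f" using f by simp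
  have "integrable (lebesgue_on {0..1}) (\<lambda>t. B * \<bar>f t\<bar>)" using fi by auto
  moreover have "(\<lambda>t. f t * w t) \<in> borel_measurable (lebesgue_on {0..1})"
    using fi w by measurable
  moreover have "AE t in lebesgue_on {0..1}. norm (f t * w t) \<le> norm (B * \<bar>f t\<bar>)"
  proof (rule AE_I2)
    fix t assume "t \<in> space (lebesgue_on {0..1::real})"
    then have "\<bar>w t\<bar> \<le> B" using B by simp
    then show "norm (f t * w t) \<le> norm (B * \<bar>f t\<bar>)"
      by (simp add: abs_mult) (metis abs_ge_zero abs_le_self_iff mult.commute mult_left_mono order.trans abs_ge_self)
  qed
  ultimately show "(\<lambda>t. f t * w t) \<in> {g. integrable (lebesgue_on {0..1}) g}"
    using Bochner_Integration.integrable_bound by blast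
qed

lemma L1norm_nonneg: "L1norm f \<ge> 0"
  unfolding L1norm_def by simp

lemma L1norm_scale: "f \<in> L1 \<Longrightarrow> L1norm (\<lambda>t. c * f t) = \<bar>c\<bar> * L1norm f"
  unfolding L1norm_def by (simp add: abs_mult)

lemma abs_int_le: "f \<in> L1 \<Longrightarrow> \<bar>integral\<^sup>L (lebesgue_on {0..1}) f\<bar> \<le> L1norm f"
  unfolding L1norm_def L1_def by (simp add: integral_abs_bound)


lemma dualD:
  assumes "\<phi> \<in> L1dual"
  shows "f \<in> L1 \<Longrightarrow> g \<in> L1 \<Longrightarrow> \<phi> (\<lambda>t. f t + g t) = \<phi> f + \<phi> g"
    and "f \<in> L1 \<Longrightarrow> \<phi> (\<lambda>t. c * f t) = c * \<phi> f"
    and "f \<notin> L1 \<Longrightarrow> \<phi> f = 0"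
  using assms unfolding L1dual_def by auto

lemma dual_bound:
  assumes "\<phi> \<in> L1dual"
  obtains C where "C > 0" "\<And>f. f \<in> L1 \<Longrightarrow> \<bar>\<phi> f\<bar> \<le> C * L1norm f"
proof -
  have "\<exists>C. \<forall>f\<in>L1. \<bar>\<phi> f\<bar> \<le> C * L1norm f" using assms unfolding L1dual_def by blast
  then obtain C where C: "\<And>f. f \<in> L1 \<Longrightarrow> \<bar>\<phi> f\<bar> \<le> C * L1norm f" by blast
  show ?thesis
  proof (rule that[of "max C 1"])
    fix f assume f: "f \<in> L1"
    have "C * L1norm f \<le> max C 1 * L1norm f" by (rule mult_right_mono) (auto simp: L1norm_nonneg)
    then show "\<bar>\<phi> f\<bar> \<le> max C 1 * L1norm f" using C[OF f] by linarith
  qed auto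
qed

lemma dual_zero: "\<phi> \<in> L1dual \<Longrightarrow> \<phi> (\<lambda>t. 0) = 0"
  using dualD(2)[of \<phi> "\<lambda>t. 0" 0] L1_const[of 0] by simp


lemma L1_sum: "finite J \<Longrightarrow> (\<And>j. j \<in> J \<Longrightarrow> f j \<in> L1) \<Longrightarrow> (\<lambda>t. \<Sum>j\<in>J. c j * f j t) \<in> L1"
  unfolding L1_def by auto

lemma dual_sum:
  assumes "\<phi> \<in> L1dual" "finite J" "\<And>j. j \<in> J \<Longrightarrow> f j \<in> L1"
  shows "\<phi> (\<lambda>t. \<Sum>j\<in>J. c j * f j t) = (\<Sum>j\<in>J. c j * \<phi> (f j))"
  using assms(2,3)
proof (induction J rule: finite_induct)
  case empty then show ?case using dual_zero[OF assms(1)] by simp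
next
  case (insert a J)
  have L: "(\<lambda>t. \<Sum>j\<in>J. c j * f j t) \<in> L1" using L1_sum[of J f c] insert by auto
  have "\<phi> (\<lambda>t. \<Sum>j\<in>insert a J. c j * f j t) = \<phi> (\<lambda>t. c a * f a t + (\<Sum>j\<in>J. c j * f j t))"
    using insert by simp
  also have "\<dots> = \<phi> (\<lambda>t. c a * f a t) + \<phi> (\<lambda>t. \<Sum>j\<in>J. c j * f j t)"
    using dualD(1)[OF assms(1) L1_scale L, of "f a" "c a"] insert by auto
  also have "\<dots> = c a * \<phi> (f a) + (\<Sum>j\<in>J. c j * \<phi> (f j))"
    using dualD(2)[OF assms(1), of "f a" "c a"] insert by auto
  finally show ?case using insert by simp
qed

lemma dual_diff:
  assumes "\<phi> \<in> L1dual" "f \<in> L1" "g \<in> L1"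
  shows "\<phi> (\<lambda>t. f t - g t) = \<phi> f - \<phi> g"
proof -
  have "(\<lambda>t. f t - g t) = (\<lambda>t. f t + (-1) * g t)" by auto
  then show ?thesis using dualD(1)[OF assms(1) assms(2) L1_scale[OF assms(3), of "-1"]]
      dualD(2)[OF assms(1) assms(3), of "-1"] by simp
qed

lemma L1norm_zero_cong: "(\<And>t. t \<in> {0..1} \<Longrightarrow> f t = 0) \<Longrightarrow> L1norm f = 0"
  unfolding L1norm_def by (subst Bochner_Integration.integral_cong[where g="\<lambda>_. 0"]) auto

lemma dual_cong:
  assumes "\<phi> \<in> L1dual" "f \<in> L1" "g \<in> L1" "\<And>t. t \<in> {0..1} \<Longrightarrow> f t = g t"
  shows "\<phi> f = \<phi> g"
proof -
  obtain C where C: "\<And>f. f \<in> L1 \<Longrightarrow> \<bar>\<phi> f\<bar> \<le> C * L1norm f" using dual_bound[OF assms(1)] by blast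
  have "L1norm (\<lambda>t. f t - g t) = 0" using assms(4) by (intro L1norm_zero_cong) auto
  moreover have "(\<lambda>t. f t - g t) \<in> L1" using L1_add[OF assms(2) L1_scale[OF assms(3), of "-1"]] by simp
  ultimately have "\<phi> (\<lambda>t. f t - g t) = 0" using C by fastforce
  then show ?thesis using dual_diff[OF assms(1-3)] by simp
qed

lemma dual_scale: "\<phi> \<in> L1dual \<Longrightarrow> (\<lambda>x. r * \<phi> x) \<in> L1dual"
proof -
  assume p: "\<phi> \<in> L1dual"
  obtain C where C: "\<And>f. f \<in> L1 \<Longrightarrow> \<bar>\<phi> f\<bar> \<le> C * L1norm f" using dual_bound[OF p] by blast
  have "\<forall>f\<in>L1. \<bar>r * \<phi> f\<bar> \<le> (\<bar>r\<bar> * C) * L1norm f"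
    using C by (simp add: abs_mult mult.assoc mult_left_mono)
  then have "\<exists>C. \<forall>f\<in>L1. \<bar>r * \<phi> f\<bar> \<le> C * L1norm f" by blast
  then show ?thesis using p unfolding L1dual_def by (auto simp: algebra_simps)
qed

lemma dual_comb: "\<phi> \<in> L1dual \<Longrightarrow> \<rho> \<in> L1dual \<Longrightarrow> (\<lambda>x. \<phi> x + r * \<rho> x) \<in> L1dual"
proof -
  assume p: "\<phi> \<in> L1dual" and q: "\<rho> \<in> L1dual"
  obtain C where C: "\<And>f. f \<in> L1 \<Longrightarrow> \<bar>\<phi> f\<bar> \<le> C * L1norm f" using dual_bound[OF p] by blast
  obtain D where D: "\<And>f. f \<in> L1 \<Longrightarrow> \<bar>\<rho> f\<bar> \<le> D * L1norm f" using dual_bound[OF q] by blast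
  have "\<forall>f\<in>L1. \<bar>\<phi> f + r * \<rho> f\<bar> \<le> (C + \<bar>r\<bar> * D) * L1norm f"
  proof
    fix f assume f: "f \<in> L1"
    have "\<bar>r * \<rho> f\<bar> \<le> \<bar>r\<bar> * (D * L1norm f)" using D[OF f] by (simp add: abs_mult mult_left_mono)
    then show "\<bar>\<phi> f + r * \<rho> f\<bar> \<le> (C + \<bar>r\<bar> * D) * L1norm f"
      using C[OF f] by (simp add: algebra_simps)
  qed
  then have "\<exists>C. \<forall>f\<in>L1. \<bar>\<phi> f + r * \<rho> f\<bar> \<le> C * L1norm f" by blast
  then show ?thesis using p q unfolding L1dual_def by (auto simp: algebra_simps)
qed

definition wfun :: "(real \<Rightarrow> real) \<Rightarrow> (real \<Rightarrow> real) \<Rightarrow> real" where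
  "wfun w g = (if g \<in> L1 then integral\<^sup>L (lebesgue_on {0..1}) (\<lambda>t. g t * w t) else 0)"

lemma wf_bound:
  assumes w: "w \<in> borel_measurable (lebesgue_on {0..1})" "\<And>t. t \<in> {0..1} \<Longrightarrow> \<bar>w t\<bar> \<le> 1"
    and g: "g \<in> L1"
  shows "\<bar>wfun w g\<bar> \<le> L1norm g"
proof -
  have I: "integrable (lebesgue_on {0..1}) (\<lambda>t. g t * w t)"
    using L1_mult_bdd[OF g w] unfolding L1_def by auto
  have "\<bar>wfun w g\<bar> \<le> integral\<^sup>L (lebesgue_on {0..1}) (\<lambda>t. \<bar>g t * w t\<bar>)"
    using g by (simp add: wfun_def)
  also have "\<dots> \<le> L1norm g" unfolding L1norm_def
  proof (rule integral_mono)
    show "integrable (lebesgue_on {0..1}) (\<lambda>t. \<bar>g t * w t\<bar>)" using I by auto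
    show "integrable (lebesgue_on {0..1}) (\<lambda>t. \<bar>g t\<bar>)" using g unfolding L1_def by auto
    fix t assume "t \<in> space (lebesgue_on {0..1::real})"
    then have "\<bar>w t\<bar> \<le> 1" using w by auto
    then show "\<bar>g t * w t\<bar> \<le> \<bar>g t\<bar>" by (simp add: abs_mult mult_left_le)
  qed
  finally show ?thesis .
qed

lemma wf_dual:
  assumes w: "w \<in> borel_measurable (lebesgue_on {0..1})" "\<And>t. t \<in> {0..1} \<Longrightarrow> \<bar>w t\<bar> \<le> 1"
  shows "wfun w \<in> L1dual"
proof -
  have I: "g \<in> L1 \<Longrightarrow> integrable (lebesgue_on {0..1}) (\<lambda>t. g t * w t)" for g
    using L1_mult_bdd[OF _ w] unfolding L1_def by auto
  have B: "\<bar>wfun w g\<bar> \<le> 1 * L1norm g" if g: "g \<in> L1" for g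
  proof -
    have "\<bar>wfun w g\<bar> \<le> integral\<^sup>L (lebesgue_on {0..1}) (\<lambda>t. \<bar>g t * w t\<bar>)"
      using g by (simp add: wfun_def)
    also have "\<dots> \<le> L1norm g" unfolding L1norm_def
    proof (rule integral_mono)
      show "integrable (lebesgue_on {0..1}) (\<lambda>t. \<bar>g t * w t\<bar>)" using I[OF g] by auto
      show "integrable (lebesgue_on {0..1}) (\<lambda>t. \<bar>g t\<bar>)" using g unfolding L1_def by auto
      fix t assume "t \<in> space (lebesgue_on {0..1::real})"
      then have "\<bar>w t\<bar> \<le> 1" using w by auto
      then show "\<bar>g t * w t\<bar> \<le> \<bar>g t\<bar>" by (simp add: abs_mult mult_left_le)
    qed
    finally show ?thesis by simp
  qed
  show ?thesis unfolding L1dual_def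
  proof (intro CollectI conjI ballI allI impI exI[of _ 1])
    fix f g assume f: "f \<in> L1" and g: "g \<in> L1"
    show "wfun w (\<lambda>t. f t + g t) = wfun w f + wfun w g"
      using I[OF f] I[OF g] f g L1_add[OF f g] by (simp add: wfun_def distrib_right)
  next
    fix c f assume f: "f \<in> L1"
    show "wfun w (\<lambda>t. c * f t) = c * wfun w f"
      using I[OF f] f L1_scale[OF f] by (simp add: wfun_def mult.assoc)
  next
    fix f assume "f \<notin> L1" then show "wfun w f = 0" by (simp add: wfun_def)
  qed (use B in auto)
qed


definition adm :: "nat \<Rightarrow> (nat \<Rightarrow> (real\<Rightarrow>real)\<Rightarrow>real) \<Rightarrow> bool" where
  "adm n xs \<longleftrightarrow> (\<forall>k<n. xs k \<in> L1dual) \<and> (\<forall>g\<in>L1. L1norm g \<le> 1 \<longrightarrow> (\<Sum>k<n. \<bar>xs k g\<bar>) \<le> 1)"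

lemma enorm_eq: "fbl_enorm f = (SUP p \<in> {(n,xs). adm n xs}. ereal (\<Sum>k<fst p. \<bar>f (snd p k)\<bar>))"
proof -
  have "{(n, xs) | (n::nat) xs. (\<forall>k<n. xs k \<in> L1dual) \<and>
        (\<forall>g\<in>L1. L1norm g \<le> 1 \<longrightarrow> (\<Sum>k<n. \<bar>xs k g\<bar>) \<le> 1)} = {(n,xs). adm n xs}"
    unfolding adm_def by auto
  then show ?thesis unfolding fbl_enorm_def by simp
qed

lemma enorm_ge: "adm n xs \<Longrightarrow> ereal (\<Sum>k<n. \<bar>f (xs k)\<bar>) \<le> fbl_enorm f"
  unfolding enorm_eq by (rule SUP_upper2[of "(n,xs)"]) auto

lemma enorm_le: "(\<And>n xs. adm n xs \<Longrightarrow> (\<Sum>k<n. \<bar>f (xs k)\<bar>) \<le> c) \<Longrightarrow> fbl_enorm f \<le> ereal c"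
  unfolding enorm_eq by (rule SUP_least) auto

lemma adm0: "adm 0 xs" unfolding adm_def by auto

lemma enorm_zero: "fbl_enorm (\<lambda>\<phi>. 0) = 0"
proof (rule antisym)
  show "fbl_enorm (\<lambda>\<phi>. 0) \<le> 0" using enorm_le[of "\<lambda>\<phi>. 0" 0] by (simp add: zero_ereal_def)
  show "0 \<le> fbl_enorm (\<lambda>\<phi>. 0)" using enorm_ge[OF adm0, of "\<lambda>\<phi>. 0"] by (simp add: zero_ereal_def)
qed

lemma adm_le:
  assumes a: "adm n xs" and g: "g \<in> L1"
  shows "(\<Sum>k<n. \<bar>xs k g\<bar>) \<le> L1norm g"
proof (cases "L1norm g = 0")
  case True
  have "\<bar>xs k g\<bar> = 0" if k: "k < n" for k
  proof -
    have "xs k \<in> L1dual" using a k unfolding adm_def by auto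
    then obtain C where "\<And>f. f \<in> L1 \<Longrightarrow> \<bar>xs k f\<bar> \<le> C * L1norm f" using dual_bound by blast
    then show ?thesis using g True by fastforce
  qed
  then show ?thesis using True by simp
next
  case False
  define N where "N = L1norm g"
  have N: "N > 0" using False L1norm_nonneg[of g] unfolding N_def by auto
  have g': "(\<lambda>t. (1/N) * g t) \<in> L1" using L1_scale[OF g] .
  have "L1norm (\<lambda>t. (1/N) * g t) = 1" using L1norm_scale[OF g, of "1/N"] N unfolding N_def by simp
  then have "(\<Sum>k<n. \<bar>xs k (\<lambda>t. (1/N) * g t)\<bar>) \<le> 1" using a g' unfolding adm_def by auto
  moreover have "xs k (\<lambda>t. (1/N) * g t) = (1/N) * xs k g" if "k < n" for k
    using dualD(2)[of "xs k" g "1/N"] a that g unfolding adm_def by auto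
  ultimately have "(\<Sum>k<n. (1/N) * \<bar>xs k g\<bar>) \<le> 1" using N by (simp add: abs_mult)
  then have "(1/N) * (\<Sum>k<n. \<bar>xs k g\<bar>) \<le> 1" by (simp add: sum_distrib_left)
  then show ?thesis using N unfolding N_def[symmetric] by (simp add: field_simps)
qed

lemma adm_single: "\<psi> \<in> L1dual \<Longrightarrow> (\<And>f. f \<in> L1 \<Longrightarrow> \<bar>\<psi> f\<bar> \<le> L1norm f) \<Longrightarrow> adm 1 (\<lambda>k. \<psi>)"
  unfolding adm_def by (auto intro: order_trans)

lemma hom_bound:
  assumes w: "pos_homogeneous w" and p: "\<psi> \<in> L1dual" and B: "B > 0"
    and pb: "\<And>f. f \<in> L1 \<Longrightarrow> \<bar>\<psi> f\<bar> \<le> B * L1norm f" and e: "fbl_enorm w < ereal e"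
  shows "\<bar>w \<psi>\<bar> \<le> B * e"
proof -
  define \<psi>' where "\<psi>' = (\<lambda>x. (1/B) * \<psi> x)"
  have p': "\<psi>' \<in> L1dual" unfolding \<psi>'_def by (rule dual_scale[OF p])
  have "\<bar>\<psi>' f\<bar> \<le> L1norm f" if f: "f \<in> L1" for f
    using pb[OF f] B unfolding \<psi>'_def by (simp add: abs_mult field_simps)
  then have "adm 1 (\<lambda>k. \<psi>')" using adm_single[OF p'] by blast
  from le_less_trans[OF enorm_ge[OF this, of w] e] have "\<bar>w \<psi>'\<bar> < e" by simp
  moreover have "\<forall>r>0. w (\<lambda>x. r * \<psi> x) = r * w \<psi>" using w p unfolding pos_homogeneous_def by blast
  then have "w \<psi>' = (1/B) * w \<psi>" unfolding \<psi>'_def using B by (meson divide_pos_pos zero_less_one)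
  ultimately show ?thesis using B by (simp add: abs_mult field_simps)
qed

lemma gen_ext: "f \<in> fbl_gen \<Longrightarrow> \<phi> \<notin> L1dual \<Longrightarrow> f \<phi> = 0"
  by (induction f rule: fbl_gen.induct) (auto simp: delta_def)

lemma gen_hom: "f \<in> fbl_gen \<Longrightarrow> pos_homogeneous f"
proof (induction f rule: fbl_gen.induct)
  case (base x) then show ?case
    unfolding pos_homogeneous_def delta_def using dual_scale by auto
next
  case (add f g) then show ?case unfolding pos_homogeneous_def by (auto simp: algebra_simps)
next
  case (smult f c) then show ?case unfolding pos_homogeneous_def by (auto simp: algebra_simps)
next
  case (sup f g) then show ?case unfolding pos_homogeneous_def
    by (auto simp: max_def mult_le_cancel_left_pos)
next
  case (inf f g) then show ?case unfolding pos_homogeneous_def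
    by (auto simp: min_def mult_le_cancel_left_pos)
qed

lemma max_lip: "\<bar>max a b - max c d\<bar> \<le> \<bar>a - c\<bar> + \<bar>b - (d::real)\<bar>"
  by (cases "a \<le> b"; cases "c \<le> d") (auto simp: max_def abs_if)
lemma min_lip: "\<bar>min a b - min c d\<bar> \<le> \<bar>a - c\<bar> + \<bar>b - (d::real)\<bar>"
  by (cases "a \<le> b"; cases "c \<le> d") (auto simp: min_def abs_if)

lemma gen_lip: "f \<in> fbl_gen \<Longrightarrow> \<exists>X K. finite X \<and> X \<subseteq> L1 \<and> K \<ge> 0 \<and>
   (\<forall>\<phi>\<in>L1dual. \<forall>\<psi>\<in>L1dual. \<bar>f \<phi> - f \<psi>\<bar> \<le> K * (\<Sum>x\<in>X. \<bar>\<phi> x - \<psi> x\<bar>))"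
proof (induction f rule: fbl_gen.induct)
  case (base x) then show ?case
    by (intro exI[of _ "{x}"] exI[of _ 1]) (auto simp: delta_def)
next
  case (add f g)
  then obtain X K Y M where X: "finite X" "X \<subseteq> L1" "K \<ge> 0" "\<forall>\<phi>\<in>L1dual. \<forall>\<psi>\<in>L1dual. \<bar>f \<phi> - f \<psi>\<bar> \<le> K * (\<Sum>x\<in>X. \<bar>\<phi> x - \<psi> x\<bar>)"
    and Y: "finite Y" "Y \<subseteq> L1" "M \<ge> 0" "\<forall>\<phi>\<in>L1dual. \<forall>\<psi>\<in>L1dual. \<bar>g \<phi> - g \<psi>\<bar> \<le> M * (\<Sum>x\<in>Y. \<bar>\<phi> x - \<psi> x\<bar>)"
    by blast
  show ?case
  proof (intro exI[of _ "X \<union> Y"] exI[of _ "K + M"] conjI ballI)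
    fix \<phi> \<psi> assume p: "\<phi> \<in> L1dual" "\<psi> \<in> L1dual"
    have s1: "(\<Sum>x\<in>X. \<bar>\<phi> x - \<psi> x\<bar>) \<le> (\<Sum>x\<in>X \<union> Y. \<bar>\<phi> x - \<psi> x\<bar>)"
      by (rule sum_mono2) (use X Y in auto)
    have s2: "(\<Sum>x\<in>Y. \<bar>\<phi> x - \<psi> x\<bar>) \<le> (\<Sum>x\<in>X \<union> Y. \<bar>\<phi> x - \<psi> x\<bar>)"
      by (rule sum_mono2) (use X Y in auto)
    have "\<bar>(f \<phi> + g \<phi>) - (f \<psi> + g \<psi>)\<bar> \<le> K * (\<Sum>x\<in>X. \<bar>\<phi> x - \<psi> x\<bar>) + M * (\<Sum>x\<in>Y. \<bar>\<phi> x - \<psi> x\<bar>)"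
    proof -
      have a1: "\<bar>f \<phi> - f \<psi>\<bar> \<le> K * (\<Sum>x\<in>X. \<bar>\<phi> x - \<psi> x\<bar>)" using X(4) p by blast
      have a2: "\<bar>g \<phi> - g \<psi>\<bar> \<le> M * (\<Sum>x\<in>Y. \<bar>\<phi> x - \<psi> x\<bar>)" using Y(4) p by blast
      have "\<bar>(f \<phi> + g \<phi>) - (f \<psi> + g \<psi>)\<bar> \<le> \<bar>f \<phi> - f \<psi>\<bar> + \<bar>g \<phi> - g \<psi>\<bar>"
        by (simp only: add_diff_add abs_triangle_ineq)
      then show ?thesis using a1 a2 by linarith
    qed
    also have "\<dots> \<le> K * (\<Sum>x\<in>X \<union> Y. \<bar>\<phi> x - \<psi> x\<bar>) + M * (\<Sum>x\<in>X \<union> Y. \<bar>\<phi> x - \<psi> x\<bar>)"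
      using s1 s2 X(3) Y(3) by (intro add_mono mult_left_mono) auto
    finally show "\<bar>(f \<phi> + g \<phi>) - (f \<psi> + g \<psi>)\<bar> \<le> (K + M) * (\<Sum>x\<in>X \<union> Y. \<bar>\<phi> x - \<psi> x\<bar>)"
      by (simp add: algebra_simps)
  qed (use X Y in auto)
next
  case (smult f c)
  then obtain X K where X: "finite X" "X \<subseteq> L1" "K \<ge> 0" "\<forall>\<phi>\<in>L1dual. \<forall>\<psi>\<in>L1dual. \<bar>f \<phi> - f \<psi>\<bar> \<le> K * (\<Sum>x\<in>X. \<bar>\<phi> x - \<psi> x\<bar>)"
    by blast
  show ?case
  proof (intro exI[of _ X] exI[of _ "\<bar>c\<bar> * K"] conjI ballI)
    fix \<phi> \<psi> assume p: "\<phi> \<in> L1dual" "\<psi> \<in> L1dual"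
    have "\<bar>c * f \<phi> - c * f \<psi>\<bar> = \<bar>c\<bar> * \<bar>f \<phi> - f \<psi>\<bar>" by (simp add: abs_mult[symmetric] algebra_simps)
    also have "\<dots> \<le> \<bar>c\<bar> * (K * (\<Sum>x\<in>X. \<bar>\<phi> x - \<psi> x\<bar>))" using X(4) p by (intro mult_left_mono) auto
    finally show "\<bar>c * f \<phi> - c * f \<psi>\<bar> \<le> \<bar>c\<bar> * K * (\<Sum>x\<in>X. \<bar>\<phi> x - \<psi> x\<bar>)" by (simp add: mult.assoc)
  qed (use X in auto)
next
  case (sup f g)
  then obtain X K Y M where X: "finite X" "X \<subseteq> L1" "K \<ge> 0" "\<forall>\<phi>\<in>L1dual. \<forall>\<psi>\<in>L1dual. \<bar>f \<phi> - f \<psi>\<bar> \<le> K * (\<Sum>x\<in>X. \<bar>\<phi> x - \<psi> x\<bar>)"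
    and Y: "finite Y" "Y \<subseteq> L1" "M \<ge> 0" "\<forall>\<phi>\<in>L1dual. \<forall>\<psi>\<in>L1dual. \<bar>g \<phi> - g \<psi>\<bar> \<le> M * (\<Sum>x\<in>Y. \<bar>\<phi> x - \<psi> x\<bar>)"
    by blast
  show ?case
  proof (intro exI[of _ "X \<union> Y"] exI[of _ "K + M"] conjI ballI)
    fix \<phi> \<psi> assume p: "\<phi> \<in> L1dual" "\<psi> \<in> L1dual"
    have s1: "(\<Sum>x\<in>X. \<bar>\<phi> x - \<psi> x\<bar>) \<le> (\<Sum>x\<in>X \<union> Y. \<bar>\<phi> x - \<psi> x\<bar>)"
      by (rule sum_mono2) (use X Y in auto)
    have s2: "(\<Sum>x\<in>Y. \<bar>\<phi> x - \<psi> x\<bar>) \<le> (\<Sum>x\<in>X \<union> Y. \<bar>\<phi> x - \<psi> x\<bar>)"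
      by (rule sum_mono2) (use X Y in auto)
    have "\<bar>max (f \<phi>) (g \<phi>) - max (f \<psi>) (g \<psi>)\<bar> \<le> \<bar>f \<phi> - f \<psi>\<bar> + \<bar>g \<phi> - g \<psi>\<bar>" by (rule max_lip)
    also have "\<dots> \<le> K * (\<Sum>x\<in>X. \<bar>\<phi> x - \<psi> x\<bar>) + M * (\<Sum>x\<in>Y. \<bar>\<phi> x - \<psi> x\<bar>)"
      using X(4) Y(4) p by (intro add_mono) auto
    also have "\<dots> \<le> K * (\<Sum>x\<in>X \<union> Y. \<bar>\<phi> x - \<psi> x\<bar>) + M * (\<Sum>x\<in>X \<union> Y. \<bar>\<phi> x - \<psi> x\<bar>)"
      using s1 s2 X(3) Y(3) by (intro add_mono mult_left_mono) auto
    finally show "\<bar>max (f \<phi>) (g \<phi>) - max (f \<psi>) (g \<psi>)\<bar> \<le> (K + M) * (\<Sum>x\<in>X \<union> Y. \<bar>\<phi> x - \<psi> x\<bar>)"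
      by (simp add: algebra_simps)
  qed (use X Y in auto)
next
  case (inf f g)
  then obtain X K Y M where X: "finite X" "X \<subseteq> L1" "K \<ge> 0" "\<forall>\<phi>\<in>L1dual. \<forall>\<psi>\<in>L1dual. \<bar>f \<phi> - f \<psi>\<bar> \<le> K * (\<Sum>x\<in>X. \<bar>\<phi> x - \<psi> x\<bar>)"
    and Y: "finite Y" "Y \<subseteq> L1" "M \<ge> 0" "\<forall>\<phi>\<in>L1dual. \<forall>\<psi>\<in>L1dual. \<bar>g \<phi> - g \<psi>\<bar> \<le> M * (\<Sum>x\<in>Y. \<bar>\<phi> x - \<psi> x\<bar>)"
    by blast
  show ?case
  proof (intro exI[of _ "X \<union> Y"] exI[of _ "K + M"] conjI ballI)
    fix \<phi> \<psi> assume p: "\<phi> \<in> L1dual" "\<psi> \<in> L1dual"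
    have s1: "(\<Sum>x\<in>X. \<bar>\<phi> x - \<psi> x\<bar>) \<le> (\<Sum>x\<in>X \<union> Y. \<bar>\<phi> x - \<psi> x\<bar>)"
      by (rule sum_mono2) (use X Y in auto)
    have s2: "(\<Sum>x\<in>Y. \<bar>\<phi> x - \<psi> x\<bar>) \<le> (\<Sum>x\<in>X \<union> Y. \<bar>\<phi> x - \<psi> x\<bar>)"
      by (rule sum_mono2) (use X Y in auto)
    have "\<bar>min (f \<phi>) (g \<phi>) - min (f \<psi>) (g \<psi>)\<bar> \<le> \<bar>f \<phi> - f \<psi>\<bar> + \<bar>g \<phi> - g \<psi>\<bar>" by (rule min_lip)
    also have "\<dots> \<le> K * (\<Sum>x\<in>X. \<bar>\<phi> x - \<psi> x\<bar>) + M * (\<Sum>x\<in>Y. \<bar>\<phi> x - \<psi> x\<bar>)"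
      using X(4) Y(4) p by (intro add_mono) auto
    also have "\<dots> \<le> K * (\<Sum>x\<in>X \<union> Y. \<bar>\<phi> x - \<psi> x\<bar>) + M * (\<Sum>x\<in>X \<union> Y. \<bar>\<phi> x - \<psi> x\<bar>)"
      using s1 s2 X(3) Y(3) by (intro add_mono mult_left_mono) auto
    finally show "\<bar>min (f \<phi>) (g \<phi>) - min (f \<psi>) (g \<psi>)\<bar> \<le> (K + M) * (\<Sum>x\<in>X \<union> Y. \<bar>\<phi> x - \<psi> x\<bar>)"
      by (simp add: algebra_simps)
  qed (use X Y in auto)
qed


lemma dyad_lt: "dyad L t < 2^L"
  unfolding dyad_def by (simp add: min_less_iff_disj)

lemma sum_chi: "(\<Sum>j<2^L. s j * chi L j t) = s (dyad L t)"
proof -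
  have "(\<Sum>j<2^L. s j * chi L j t) = (\<Sum>j<2^L. if dyad L t = j then s j else 0)"
    unfolding chi_def by (rule sum.cong) auto
  also have "\<dots> = s (dyad L t)" using dyad_lt[of L t] by (simp add: sum.delta)
  finally show ?thesis .
qed

lemma nat_aux: "(q::nat) \<ge> 1 \<Longrightarrow> (2^K * q - 1) div q = 2^K - 1"
proof -
  assume q: "q \<ge> 1"
  have "2^K * q - 1 = (2^K - 1) * q + (q - 1)"
    using q by (simp add: algebra_simps)
  also have "\<dots> = (q - 1) + (2^K - 1) * q" by simp
  finally have e: "2^K * q - 1 = (q - 1) + (2^K - 1) * q" .
  have "((q - 1) + (2^K - 1) * q) div q = (2^K - 1) + (q - 1) div q"
    using q by (subst div_mult_self1) auto
  also have "(q - 1) div q = 0" using q by simp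
  finally show ?thesis unfolding e by simp
qed

lemma dyad_div: assumes "K \<le> L" shows "dyad K t = dyad L t div 2^(L-K)"
proof -
  define q :: nat where "q = 2^(L-K)"
  have q1: "q \<ge> 1" unfolding q_def by simp
  have LK: "(2::nat)^L = 2^K * q" unfolding q_def using assms by (simp add: power_add[symmetric])
  define a where "a = \<lfloor>2^L * t\<rfloor>"
  have "real q = (2::real)^(L-K)" unfolding q_def by simp
  also have "\<dots> = 2^L/2^K" by (rule power_diff) (use assms in auto)
  finally have qr: "real q = 2^L/2^K" .
  have "(2::real)^K * t = (2^L * t) / real_of_int (int q)"
    using qr q1 by (simp add: field_simps)
  then have fa: "\<lfloor>2^K * t\<rfloor> = a div int q" unfolding a_def
    using floor_divide_real_eq_div[of "int q" "2^L*t"] by simp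
  show ?thesis
  proof (cases "a < 0")
    case True
    then have "a div int q < 0" using q1 by (simp add: div_neg_pos_less0)
    then show ?thesis using True fa unfolding dyad_def a_def[symmetric] by simp
  next
    case False
    define n where "n = nat a"
    have nq: "nat (a div int q) = n div q" using False unfolding n_def by (simp add: nat_div_distrib)
    have d1: "dyad K t = min (n div q) (2^K - 1)" unfolding dyad_def fa nq ..
    have d2: "dyad L t = min n (2^L - 1)" unfolding dyad_def a_def[symmetric] n_def ..
    show ?thesis
    proof (cases "n \<le> 2^L - 1")
      case True
      have "n div q \<le> (2^L - 1) div q" using True by (rule div_le_mono)
      also have "\<dots> = 2^K - 1" unfolding LK using nat_aux[OF q1] .
      finally show ?thesis unfolding d1 d2 q_def[symmetric] using True by simp
    next
      case False
      have "2^K * q \<le> n" using False LK by simp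
      then have "2^K \<le> n div q" using q1 by (simp add: div_greater_zero_iff le_div_geq less_eq_div_iff_mult_less_eq)
      then show ?thesis unfolding d1 d2 q_def[symmetric] using False LK nat_aux[OF q1] by simp
    qed
  qed
qed


lemma dyad_iff1: assumes "0 \<le> t" "j + 1 < (2::nat)^L"
  shows "dyad L t = j \<longleftrightarrow> real j \<le> 2^L * t \<and> 2^L * t < real j + 1"
proof -
  have "dyad L t = j \<longleftrightarrow> nat \<lfloor>2^L * t\<rfloor> = j" unfolding dyad_def using assms(2) by (auto simp: min_def)
  also have "\<dots> \<longleftrightarrow> \<lfloor>2^L * t\<rfloor> = int j" using assms(1) by auto
  also have "\<dots> \<longleftrightarrow> real j \<le> 2^L * t \<and> 2^L * t < real j + 1" by (simp add: floor_eq_iff)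
  finally show ?thesis .
qed

lemma dyad_iff2: assumes "0 \<le> t"
  shows "dyad L t = 2^L - 1 \<longleftrightarrow> real (2^L - 1) \<le> 2^L * t"
proof -
  have "dyad L t = 2^L - 1 \<longleftrightarrow> nat \<lfloor>2^L * t\<rfloor> \<ge> 2^L - 1" unfolding dyad_def by (auto simp: min_def)
  also have "\<dots> \<longleftrightarrow> \<lfloor>2^L * t\<rfloor> \<ge> int (2^L - 1)" using assms by (auto simp: le_nat_iff)
  also have "\<dots> \<longleftrightarrow> real (2^L - 1) \<le> 2^L * t" by (metis le_floor_iff of_int_of_nat_eq)
  finally show ?thesis .
qed

lemma measure_lo: "A \<subseteq> {0..1} \<Longrightarrow> A \<in> sets lborel \<Longrightarrow> measure (lebesgue_on {0..1::real}) A = measure lborel A"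
  by (subst measure_restrict_space) auto

lemma chi_ind: "chi L j = indicator {t. dyad L t = j}"
  unfolding chi_def by (auto simp: indicator_def)

lemma chi_int: assumes j: "j < 2^L" shows "integral\<^sup>L (lebesgue_on {0..1}) (chi L j) = 1/2^L"
proof -
  have "integral\<^sup>L (lebesgue_on {0..1}) (chi L j) = measure (lebesgue_on {0..1}) ({t. dyad L t = j} \<inter> space (lebesgue_on {0..1}))"
    unfolding chi_ind by (rule Bochner_Integration.integral_indicator)
  also have "\<dots> = measure (lebesgue_on {0..1}) ({t. dyad L t = j} \<inter> {0..1})" by simp
  also have "\<dots> = 1/2^L"
  proof (cases "j + 1 < 2^L")
    case True
    have le1: "real j + 1 \<le> 2^L"
    proof -
      have "j + 1 \<le> (2::nat)^L" using True by simp
      then have "real (j + 1) \<le> real ((2::nat)^L)" by (rule of_nat_mono)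
      then show ?thesis by simp
    qed
    have A: "real j / 2^L \<le> t \<longleftrightarrow> real j \<le> 2^L * t" for t
      by (simp add: pos_divide_le_eq mult.commute)
    have B: "t < (real j + 1) / 2^L \<longleftrightarrow> 2^L * t < real j + 1" for t
      by (simp add: pos_less_divide_eq mult.commute)
    have C: "(real j + 1) / 2^L \<le> 1" using le1 by simp
    have "{t. dyad L t = j} \<inter> {0..1} = {real j/2^L..<(real j+1)/2^L}"
    proof (intro set_eqI iffI)
      fix t assume "t \<in> {t. dyad L t = j} \<inter> {0..1}"
      then have "0 \<le> t" "dyad L t = j" by auto
      then show "t \<in> {real j/2^L..<(real j+1)/2^L}" using dyad_iff1[OF _ True] A B by auto
    next
      fix t assume t: "t \<in> {real j/2^L..<(real j+1)/2^L}"
      have "0 \<le> real j / 2^L" by simp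
      then have t0: "0 \<le> t" using t unfolding atLeastLessThan_iff by linarith
      have "t \<le> 1" using t C unfolding atLeastLessThan_iff by linarith
      then show "t \<in> {t. dyad L t = j} \<inter> {0..1}" using t0 t dyad_iff1[OF t0 True] A B by auto
    qed
    moreover have "measure lborel {real j/2^L..<(real j+1)/2^L} = 1/2^L"
    proof -
      have "real j/2^L \<le> (real j+1)/2^L" by (simp add: divide_right_mono)
      then have "measure lborel {real j/2^L..<(real j+1)/2^L} = (real j+1)/2^L - real j/2^L"
        by (rule measure_lborel_Ico)
      also have "\<dots> = 1/2^L" by (simp add: diff_divide_distrib[symmetric])
      finally show ?thesis .
    qed
    moreover have "{real j/2^L..<(real j+1)/2^L} \<subseteq> {0..1}" using calculation(1) by blast
    ultimately show ?thesis using measure_lo[of "{real j/2^L..<(real j+1)/2^L}"] by simp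
  next
    case False
    then have jj: "j = 2^L - 1" using j by simp
    have rj: "real j = 2^L - 1" unfolding jj using j by (simp add: of_nat_diff)
    have A: "real j / 2^L \<le> t \<longleftrightarrow> real j \<le> 2^L * t" for t
      by (simp add: pos_divide_le_eq mult.commute)
    have "{t. dyad L t = j} \<inter> {0..1} = {real j/2^L..1}"
    proof (intro set_eqI iffI)
      fix t assume "t \<in> {t. dyad L t = j} \<inter> {0..1}"
      then have "0 \<le> t" "dyad L t = j" "t \<le> 1" by auto
      then show "t \<in> {real j/2^L..1}" using dyad_iff2[of t L] A unfolding jj by auto
    next
      fix t assume t: "t \<in> {real j/2^L..1}"
      have "0 \<le> real j / 2^L" by simp
      then have t0: "0 \<le> t" using t unfolding atLeastAtMost_iff by linarith
      then show "t \<in> {t. dyad L t = j} \<inter> {0..1}" using t dyad_iff2[OF t0, of L] A unfolding jj by auto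
    qed
    moreover have "measure lborel {real j/2^L..1} = 1/2^L"
    proof -
      have "real j/2^L \<le> 1" unfolding rj by simp
      then have "measure lborel {real j/2^L..1} = 1 - real j/2^L" by (rule measure_lborel_Icc)
      also have "\<dots> = 1/2^L" unfolding rj by (simp add: diff_divide_distrib)
      finally show ?thesis .
    qed
    ultimately show ?thesis using measure_lo[of "{real j/2^L..1}"] by simp
  qed
  finally show ?thesis .
qed


abbreviation I01 :: "(real \<Rightarrow> real) \<Rightarrow> real" where "I01 f \<equiv> integral\<^sup>L (lebesgue_on {0..1}) f"

lemma L1_int: "f \<in> L1 \<Longrightarrow> integrable (lebesgue_on {0..1}) f" unfolding L1_def by simp

lemma meas01[simp]: "measure (lebesgue_on {0..1::real}) {0..1} = 1"
  using measure_lo[of "{0..1}"] by (simp add: measure_lborel_Icc)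

lemma dyad_integral: "I01 (\<lambda>t. s (dyad L t)) = (\<Sum>j<2^L. s j) / 2^L"
proof -
  have "(\<lambda>t. s (dyad L t)) = (\<lambda>t. \<Sum>j<2^L. s j * chi L j t)" using sum_chi by auto
  then have "I01 (\<lambda>t. s (dyad L t)) = I01 (\<lambda>t. \<Sum>j<2^L. s j * chi L j t)" by simp
  also have "\<dots> = (\<Sum>j<2^L. I01 (\<lambda>t. s j * chi L j t))"
    by (rule Bochner_Integration.integral_sum) (rule L1_int[OF L1_scale[OF L1_chi]])
  also have "\<dots> = (\<Sum>j<2^L. s j / 2^L)"
    by (rule sum.cong) (auto simp: chi_int)
  finally show ?thesis by (simp add: sum_divide_distrib)
qed

lemma rad_abs[simp]: "\<bar>rad m t\<bar> = 1" unfolding rad_def by simp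
lemma rad_sq[simp]: "rad m t * rad m t = 1" unfolding rad_def by simp

lemma rad_dyad: "m < L \<Longrightarrow> rad m t = (if even (dyad L t div 2^(L - Suc m)) then 1 else -1)"
  unfolding rad_def using dyad_div[of "Suc m" L t] by simp

lemma sum_pairs: "(\<Sum>j<2*k. f j) = (\<Sum>i<k. f (2*i) + f (2*i+1::nat)) " for f :: "nat \<Rightarrow> real"
  by (induction k) (auto simp: lessThan_Suc)

lemma rad_orth: assumes "m < n" shows "I01 (\<lambda>t. rad m t * rad n t) = 0"
proof -
  define s where "s j = (if even (j div 2^(n - m)) then 1 else -1) * (if even j then 1 else (-1::real))" for j :: nat
  have "rad m t * rad n t = s (dyad (Suc n) t)" for t
    using rad_dyad[of m "Suc n" t] rad_dyad[of n "Suc n" t] assms unfolding s_def by (simp add: Suc_diff_le)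
  then have "I01 (\<lambda>t. rad m t * rad n t) = (\<Sum>j<2^Suc n. s j) / 2^Suc n"
    using dyad_integral[of s "Suc n"] by simp
  also have "(\<Sum>j<2^Suc n. s j) = 0"
  proof -
    have p: "(2::nat)^(n-m) = 2 * 2^(n-m-1)" using assms by (simp add: power_Suc[symmetric] Suc_diff_Suc)
    have "s (2*i) + s (2*i+1) = 0" for i
    proof -
      have "(2*i+1) div 2^(n-m) = (2*i) div 2^(n-m)" unfolding p by (simp add: div_mult2_eq)
      then show ?thesis unfolding s_def by simp
    qed
    then show ?thesis using sum_pairs[of s "2^n"] by simp
  qed
  finally show ?thesis by simp
qed

lemma rad_int_sq: "I01 (\<lambda>t. rad m t * rad m t) = 1"
  by simp

lemma rad_ortho: "I01 (\<lambda>t. rad m t * rad n t) = (if m = n then 1 else 0)"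
proof -
  consider "m < n" | "m = n" | "n < m" by arith
  then show ?thesis
  proof cases
    case 1 then show ?thesis using rad_orth by simp
  next
    case 2 then show ?thesis by simp
  next
    case 3 then show ?thesis using rad_orth[OF 3] by (simp add: mult.commute)
  qed
qed


lemma rad_meas: "rad m \<in> borel_measurable (lebesgue_on {0..1})"
  by (rule borel_to_lo[OF rad_meas_borel])

lemma bessel:
  assumes xm: "x \<in> borel_measurable (lebesgue_on {0..1})" and xb: "\<And>t. t \<in> {0..1} \<Longrightarrow> \<bar>x t\<bar> \<le> B"
  shows "(\<Sum>m<M. (I01 (\<lambda>t. x t * rad m t))^2) \<le> I01 (\<lambda>t. x t * x t)"
proof -
  define a where "a m = I01 (\<lambda>t. x t * rad m t)" for m
  have xL: "x \<in> L1" by (rule L1_bdd[OF xm xb])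
  have i1: "integrable (lebesgue_on {0..1}) (\<lambda>t. x t * x t)" by (rule L1_int[OF L1_mult_bdd[OF xL xm xb]])
  have i2: "integrable (lebesgue_on {0..1}) (\<lambda>t. x t * rad m t)" for m
    using L1_mult_bdd[OF xL rad_meas, where B=1] by (simp add: L1_int)
  have i3: "integrable (lebesgue_on {0..1}) (\<lambda>t. rad m t * rad n t)" for m n
    using L1_mult_bdd[OF L1_rad rad_meas, where B=1] by (simp add: L1_int)
  define F2 where "F2 t = (\<Sum>m<M. a m * (x t * rad m t))" for t
  define F3 where "F3 t = (\<Sum>m<M. \<Sum>n<M. (a m * a n) * (rad m t * rad n t))" for t
  have iF2: "integrable (lebesgue_on {0..1}) F2" unfolding F2_def using i2 by auto
  have iF3: "integrable (lebesgue_on {0..1}) F3" unfolding F3_def using i3 by auto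
  have IF2: "I01 F2 = (\<Sum>m<M. a m * a m)" unfolding F2_def
    by (subst Bochner_Integration.integral_sum) (auto simp: i2 a_def)
  have IF3: "I01 F3 = (\<Sum>m<M. a m * a m)"
  proof -
    have "I01 F3 = (\<Sum>m<M. \<Sum>n<M. (a m * a n) * I01 (\<lambda>t. rad m t * rad n t))" unfolding F3_def
      by (subst Bochner_Integration.integral_sum; auto simp: i3 intro!: sum.cong)
    also have "\<dots> = (\<Sum>m<M. \<Sum>n<M. if n = m then a m * a n else 0)"
      by (intro sum.cong refl) (auto simp: rad_ortho)
    also have "\<dots> = (\<Sum>m<M. a m * a m)" by simp
    finally show ?thesis .
  qed
  define P where "P t = (\<Sum>m<M. a m * rad m t)" for t
  have pt: "(x t - P t)^2 = x t * x t - 2 * F2 t + F3 t" for t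
  proof -
    have "(x t - P t)^2 = x t * x t - 2 * (x t * P t) + P t * P t" by (simp add: power2_eq_square algebra_simps)
    moreover have "x t * P t = F2 t" unfolding P_def F2_def by (simp add: sum_distrib_left algebra_simps)
    moreover have "P t * P t = F3 t" unfolding P_def F3_def by (simp add: sum_product algebra_simps)
    ultimately show ?thesis by simp
  qed
  have "0 \<le> I01 (\<lambda>t. (x t - P t)^2)" by (rule Bochner_Integration.integral_nonneg) auto
  also have "\<dots> = I01 (\<lambda>t. x t * x t - 2 * F2 t + F3 t)" unfolding pt ..
  also have "\<dots> = I01 (\<lambda>t. x t * x t) - 2 * I01 F2 + I01 F3"
    using i1 iF2 iF3 by simp
  finally show ?thesis unfolding IF2 IF3 a_def by (simp add: power2_eq_square)
qed


lemma rad_null_bdd: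
  assumes xm: "x \<in> borel_measurable (lebesgue_on {0..1})" and xb: "\<And>t. t \<in> {0..1} \<Longrightarrow> \<bar>x t\<bar> \<le> B"
  shows "(\<lambda>m. I01 (\<lambda>t. x t * rad m t)) \<longlonglongrightarrow> 0"
proof -
  define a where "a m = I01 (\<lambda>t. x t * rad m t)" for m
  have "summable (\<lambda>m. (a m)^2)"
    by (rule summableI_nonneg_bounded[where x="I01 (\<lambda>t. x t * x t)"])
       (auto simp: a_def intro: bessel[OF xm xb])
  then have "(\<lambda>m. (a m)^2) \<longlonglongrightarrow> 0" by (rule summable_LIMSEQ_zero)
  then have "(\<lambda>m. sqrt ((a m)^2)) \<longlonglongrightarrow> sqrt 0" by (rule tendsto_real_sqrt)
  then have "(\<lambda>m. \<bar>a m\<bar>) \<longlonglongrightarrow> 0" by simp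
  then show ?thesis unfolding a_def by (simp add: tendsto_rabs_zero_iff)
qed

lemma trunc_bound: "0 \<le> (k::real) \<Longrightarrow> \<bar>y - max (- k) (min k y)\<bar> \<le> \<bar>y\<bar>"
  by (auto simp: max_def min_def abs_if)

lemma rad_null:
  assumes xL: "x \<in> L1"
  shows "(\<lambda>m. I01 (\<lambda>t. x t * rad m t)) \<longlonglongrightarrow> 0"
proof -
  have xi: "integrable (lebesgue_on {0..1}) x" using L1_int[OF xL] .
  have xm: "x \<in> borel_measurable (lebesgue_on {0..1})" using xi by auto
  define tr where "tr k t = max (- real k) (min (real k) (x t))" for k t
  have trm: "tr k \<in> borel_measurable (lebesgue_on {0..1})" for k unfolding tr_def using xm by measurable
  have trb: "\<bar>tr k t\<bar> \<le> real k" for k t unfolding tr_def by (auto simp: max_def min_def)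
  have trL: "tr k \<in> L1" for k by (rule L1_bdd[OF trm trb])
  have dct: "(\<lambda>k. I01 (\<lambda>t. \<bar>x t - tr k t\<bar>)) \<longlonglongrightarrow> I01 (\<lambda>t. 0)"
  proof (rule integral_dominated_convergence[where w="\<lambda>t. \<bar>x t\<bar>"])
    show "(\<lambda>t. 0::real) \<in> borel_measurable (lebesgue_on {0..1})" by simp
    show "(\<lambda>t. \<bar>x t - tr k t\<bar>) \<in> borel_measurable (lebesgue_on {0..1})" for k using xm trm by measurable
    show "integrable (lebesgue_on {0..1}) (\<lambda>t. \<bar>x t\<bar>)" using xi by auto
    show "AE t in lebesgue_on {0..1}. norm \<bar>x t - tr k t\<bar> \<le> \<bar>x t\<bar>" for k
      by (rule AE_I2) (simp add: tr_def trunc_bound)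
    show "AE t in lebesgue_on {0..1}. (\<lambda>k. \<bar>x t - tr k t\<bar>) \<longlonglongrightarrow> 0"
    proof (rule AE_I2)
      fix t
      have "eventually (\<lambda>k. \<bar>x t - tr k t\<bar> = 0) sequentially"
      proof (rule eventually_sequentiallyI[of "nat \<lceil>\<bar>x t\<bar>\<rceil>"])
        fix k assume "nat \<lceil>\<bar>x t\<bar>\<rceil> \<le> k"
        then have "\<bar>x t\<bar> \<le> real k" by linarith
        then show "\<bar>x t - tr k t\<bar> = 0" unfolding tr_def by (auto simp: max_def min_def)
      qed
      then show "(\<lambda>k. \<bar>x t - tr k t\<bar>) \<longlonglongrightarrow> 0" by (rule tendsto_eventually)
    qed
  qed
  show ?thesis
  proof (rule LIMSEQ_I)
    fix r :: real assume r: "0 < r"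
    obtain k where k: "\<bar>I01 (\<lambda>t. \<bar>x t - tr k t\<bar>)\<bar> < r/2" using LIMSEQ_D[OF dct, of "r/2"] r by auto
    obtain N where N: "\<And>m. m \<ge> N \<Longrightarrow> \<bar>I01 (\<lambda>t. tr k t * rad m t)\<bar> < r/2"
      using LIMSEQ_D[OF rad_null_bdd[OF trm trb], of "r/2"] r by auto
    show "\<exists>N. \<forall>m\<ge>N. norm (I01 (\<lambda>t. x t * rad m t) - 0) < r"
    proof (intro exI allI impI)
      fix m assume m: "N \<le> m"
      have i1: "integrable (lebesgue_on {0..1}) (\<lambda>t. tr k t * rad m t)"
        using L1_mult_bdd[OF trL[of k] rad_meas, where B=1] by (simp add: L1_int)
      have i2: "integrable (lebesgue_on {0..1}) (\<lambda>t. (x t - tr k t) * rad m t)"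
        using L1_mult_bdd[OF L1_add[OF xL L1_scale[OF trL[of k], of "-1"]] rad_meas, where B=1] by (simp add: L1_int)
      have "I01 (\<lambda>t. x t * rad m t) = I01 (\<lambda>t. tr k t * rad m t + (x t - tr k t) * rad m t)"
        by (simp add: algebra_simps)
      also have "\<dots> = I01 (\<lambda>t. tr k t * rad m t) + I01 (\<lambda>t. (x t - tr k t) * rad m t)"
        using i1 i2 by simp
      finally have e: "I01 (\<lambda>t. x t * rad m t) = I01 (\<lambda>t. tr k t * rad m t) + I01 (\<lambda>t. (x t - tr k t) * rad m t)" .
      have "\<bar>I01 (\<lambda>t. (x t - tr k t) * rad m t)\<bar> \<le> I01 (\<lambda>t. \<bar>(x t - tr k t) * rad m t\<bar>)"
        by (rule integral_abs_bound)
      also have "\<dots> = I01 (\<lambda>t. \<bar>x t - tr k t\<bar>)" by (simp add: abs_mult)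
      also have "\<dots> < r/2" using k by simp
      finally show "norm (I01 (\<lambda>t. x t * rad m t) - 0) < r" using N[OF m] e by simp
    qed
  qed
qed


definition one_fn :: "real \<Rightarrow> real" where "one_fn = (\<lambda>t. 1)"

definition absd :: "(real \<Rightarrow> real) \<Rightarrow> hfun" where
  "absd x = (\<lambda>\<phi>. max (delta x \<phi>) ((-1) * delta x \<phi>))"

fun G :: "nat \<Rightarrow> hfun" where
  "G 0 = absd (rad 0)"
| "G (Suc N) = (\<lambda>\<phi>. max (G N \<phi>) (absd (rad (Suc N)) \<phi>))"

definition fN :: "nat \<Rightarrow> hfun" where
  "fN N = (\<lambda>\<phi>. min (absd one_fn \<phi>) ((1/2) * G N \<phi>))"

lemma one_L1: "one_fn \<in> L1" unfolding one_fn_def by (rule L1_const)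

lemma L1norm_one: "L1norm one_fn = 1" unfolding L1norm_def one_fn_def by simp

lemma L1norm_rad: "L1norm (rad m) = 1" unfolding L1norm_def by simp

lemma absd_val: "absd x \<phi> = \<bar>delta x \<phi>\<bar>" unfolding absd_def by (simp add: abs_if max_def)

lemma absd_gen: "x \<in> L1 \<Longrightarrow> absd x \<in> fbl_gen"
  unfolding absd_def by (rule fbl_gen.sup[OF fbl_gen.base fbl_gen.smult[OF fbl_gen.base]])

lemma G_gen: "G N \<in> fbl_gen"
  by (induction N) (auto intro: fbl_gen.sup absd_gen L1_rad)

lemma fN_gen: "fN N \<in> fbl_gen"
  unfolding fN_def by (rule fbl_gen.inf[OF absd_gen[OF one_L1] fbl_gen.smult[OF G_gen]])

lemma G_ge: "n \<le> N \<Longrightarrow> \<bar>delta (rad n) \<phi>\<bar> \<le> G N \<phi>"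
proof (induction N)
  case 0 then show ?case by (simp add: absd_val)
next
  case (Suc N) then show ?case by (auto simp: absd_val le_Suc_eq intro: le_max_iff_disj[THEN iffD2])
qed

lemma G_attain: "\<exists>n\<le>N. G N \<phi> = \<bar>delta (rad n) \<phi>\<bar>"
proof (induction N)
  case 0 then show ?case by (simp add: absd_val)
next
  case (Suc N)
  then obtain n where n: "n \<le> N" "G N \<phi> = \<bar>delta (rad n) \<phi>\<bar>" by blast
  show ?case
  proof (cases "G N \<phi> \<le> absd (rad (Suc N)) \<phi>")
    case True then show ?thesis by (intro exI[of _ "Suc N"]) (simp add: absd_val max_def)
  next
    case False then show ?thesis using n by (intro exI[of _ n]) (simp add: max_def)
  qed
qed

lemma G_mono: "N \<le> M \<Longrightarrow> G N \<phi> \<le> G M \<phi>"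
proof (induction M)
  case 0 then show ?case by simp
next
  case (Suc M) then show ?case by (auto simp: le_Suc_eq intro: le_max_iff_disj[THEN iffD2])
qed

lemma G_nonneg: "0 \<le> G N \<phi>" using G_ge[of N N \<phi>] by simp

lemma fN_nonneg: "0 \<le> fN N \<phi>" unfolding fN_def using G_nonneg[of N \<phi>] by (simp add: absd_val)

lemma fN_mono: "N \<le> M \<Longrightarrow> fN N \<phi> \<le> fN M \<phi>"
  unfolding fN_def using G_mono[of N M \<phi>] by (auto simp: min_def)

lemma fN_le: "fN N \<phi> \<le> absd one_fn \<phi>" unfolding fN_def by simp

lemma L1norm_chi: "j < 2^L \<Longrightarrow> L1norm (chi L j) = 1/2^L"
proof -
  assume j: "j < 2^L"
  have "(\<lambda>t. \<bar>chi L j t\<bar>) = chi L j" by (auto simp: chi_def)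
  then show ?thesis unfolding L1norm_def using chi_int[OF j] by simp
qed

lemma key_bound:
  assumes a: "adm n xs" and m: "\<And>k. k < n \<Longrightarrow> m k \<le> N"
  shows "(\<Sum>k<n. \<bar>xs k (rad (m k))\<bar>) \<le> 1"
proof -
  define L where "L = Suc N"
  define \<sigma> where "\<sigma> k j = (if even ((j::nat) div 2^(L - Suc (m k))) then 1 else (-1::real))" for k j
  have dual: "xs k \<in> L1dual" if "k < n" for k using a that unfolding adm_def by auto
  have rep: "rad (m k) = (\<lambda>t. \<Sum>j<(2::nat)^L. \<sigma> k j * chi L j t)" if k: "k < n" for k
  proof
    fix t
    have "m k < L" using m[OF k] unfolding L_def by simp
    then show "rad (m k) t = (\<Sum>j<(2::nat)^L. \<sigma> k j * chi L j t)"
      unfolding sum_chi \<sigma>_def using rad_dyad by simp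
  qed
  have "\<bar>xs k (rad (m k))\<bar> \<le> (\<Sum>j<(2::nat)^L. \<bar>xs k (chi L j)\<bar>)" if k: "k < n" for k
  proof -
    have "xs k (rad (m k)) = (\<Sum>j<(2::nat)^L. \<sigma> k j * xs k (chi L j))"
      unfolding rep[OF k] by (rule dual_sum[OF dual[OF k]]) (auto intro: L1_chi)
    also have "\<bar>\<dots>\<bar> \<le> (\<Sum>j<(2::nat)^L. \<bar>\<sigma> k j * xs k (chi L j)\<bar>)" by (rule sum_abs)
    also have "\<dots> = (\<Sum>j<(2::nat)^L. \<bar>xs k (chi L j)\<bar>)" by (intro sum.cong refl) (simp add: abs_mult \<sigma>_def)
    finally show ?thesis .
  qed
  then have "(\<Sum>k<n. \<bar>xs k (rad (m k))\<bar>) \<le> (\<Sum>k<n. \<Sum>j<(2::nat)^L. \<bar>xs k (chi L j)\<bar>)"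
    by (intro sum_mono) auto
  also have "\<dots> = (\<Sum>j<(2::nat)^L. \<Sum>k<n. \<bar>xs k (chi L j)\<bar>)" by (rule sum.swap)
  also have "\<dots> \<le> (\<Sum>j<(2::nat)^L. 1/2^L)"
  proof (rule sum_mono)
    fix j assume "j \<in> {..<(2::nat)^L}"
    then have "L1norm (chi L j) = 1/2^L" by (intro L1norm_chi) auto
    then show "(\<Sum>k<n. \<bar>xs k (chi L j)\<bar>) \<le> 1/2^L" using adm_le[OF a L1_chi, of L j] by simp
  qed
  also have "\<dots> = 1" by simp
  finally show ?thesis .
qed

lemma fN_norm: "fbl_enorm (fN N) \<le> ereal (1/2)"
proof (rule enorm_le)
  fix n xs assume a: "adm n xs"
  have dual: "xs k \<in> L1dual" if "k < n" for k using a that unfolding adm_def by auto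
  have "\<forall>k. \<exists>j. k < n \<longrightarrow> j \<le> N \<and> G N (xs k) = \<bar>delta (rad j) (xs k)\<bar>" using G_attain by blast
  then obtain m where m: "\<And>k. k < n \<Longrightarrow> m k \<le> N \<and> G N (xs k) = \<bar>delta (rad (m k)) (xs k)\<bar>" by metis
  have "\<bar>fN N (xs k)\<bar> \<le> (1/2) * \<bar>xs k (rad (m k))\<bar>" if k: "k < n" for k
  proof -
    have "\<bar>fN N (xs k)\<bar> = fN N (xs k)" using fN_nonneg by simp
    also have "\<dots> \<le> (1/2) * G N (xs k)" unfolding fN_def by simp
    also have "\<dots> = (1/2) * \<bar>xs k (rad (m k))\<bar>" using m[OF k] dual[OF k] by (simp add: delta_def)
    finally show ?thesis .
  qed
  then have "(\<Sum>k<n. \<bar>fN N (xs k)\<bar>) \<le> (\<Sum>k<n. (1/2) * \<bar>xs k (rad (m k))\<bar>)" by (intro sum_mono) auto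
  also have "\<dots> = (1/2) * (\<Sum>k<n. \<bar>xs k (rad (m k))\<bar>)" by (simp add: sum_distrib_left)
  also have "\<dots> \<le> 1/2" using key_bound[OF a, of m N] m by simp
  finally show "(\<Sum>k<n. \<bar>fN N (xs k)\<bar>) \<le> 1/2" .
qed


lemma gen_FBL: assumes f: "f \<in> fbl_gen" and n: "fbl_enorm f \<le> ereal c" shows "f \<in> FBL"
proof -
  have "ereal c < \<infinity>" by simp
  with n have fin: "fbl_enorm f < \<infinity>" by (rule le_less_trans)
  have ext: "extensional_dual f" unfolding extensional_dual_def using gen_ext[OF f] by blast
  have H: "f \<in> H0" unfolding H0_def using ext gen_hom[OF f] fin by blast
  have "fbl_enorm (\<lambda>\<phi>. f \<phi> - f \<phi>) < ereal e" if "e > 0" for e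
    using enorm_zero that by (simp add: zero_ereal_def)
  then show ?thesis unfolding FBL_def using H f by blast
qed

lemma fN_FBL: "fN N \<in> FBL" by (rule gen_FBL[OF fN_gen fN_norm])

lemma y_norm_le: "fbl_enorm (absd one_fn) \<le> ereal 1"
proof (rule enorm_le)
  fix n xs assume a: "adm n xs"
  have "(\<Sum>k<n. \<bar>absd one_fn (xs k)\<bar>) = (\<Sum>k<n. \<bar>xs k one_fn\<bar>)"
    using a unfolding adm_def by (intro sum.cong refl) (simp add: absd_val delta_def)
  also have "\<dots> \<le> L1norm one_fn" by (rule adm_le[OF a one_L1])
  finally show "(\<Sum>k<n. \<bar>absd one_fn (xs k)\<bar>) \<le> 1" by (simp add: L1norm_one)
qed

lemma y_FBL: "absd one_fn \<in> FBL" by (rule gen_FBL[OF absd_gen[OF one_L1] y_norm_le])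

lemma const_meas: "(\<lambda>t. 1::real) \<in> borel_measurable (lebesgue_on {0..1})" by simp

lemma y_norm_ge: "ereal 1 \<le> fbl_enorm (absd one_fn)"
proof -
  define intf where "intf = wfun (\<lambda>t. 1)"
  have d: "intf \<in> L1dual" unfolding intf_def by (rule wf_dual[OF const_meas]) simp
  have "\<bar>intf f\<bar> \<le> L1norm f" if "f \<in> L1" for f unfolding intf_def by (rule wf_bound[OF const_meas _ that]) simp
  then have a: "adm 1 (\<lambda>k. intf)" by (rule adm_single[OF d])
  have "intf one_fn = 1" unfolding intf_def wfun_def using one_L1 by (simp add: one_fn_def)
  then have "absd one_fn intf = 1" using d by (simp add: absd_val delta_def)
  then show ?thesis using enorm_ge[OF a, of "absd one_fn"] by simp
qed

lemma least:
  assumes z: "z \<in> FBL" and up: "\<And>N. fle (fN N) z"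
  shows "fle (absd one_fn) z"
  unfolding fle_def
proof
  fix \<phi> assume p: "\<phi> \<in> L1dual"
  show "absd one_fn \<phi> \<le> z \<phi>"
  proof (rule ccontr)
    assume nle: "\<not> absd one_fn \<phi> \<le> z \<phi>"
    define A where "A = \<bar>\<phi> one_fn\<bar>"
    have A0: "A \<ge> 0" unfolding A_def by simp
    have yA: "absd one_fn \<phi> = A" using p by (simp add: absd_val delta_def A_def)
    define d where "d = A - z \<phi>"
    have d: "d > 0" using nle yA unfolding d_def by simp
    obtain C where C: "C > 0" "\<And>f. f \<in> L1 \<Longrightarrow> \<bar>\<phi> f\<bar> \<le> C * L1norm f" using dual_bound[OF p] by blast
    define t where "t = C + 2*A + 1"
    have t: "t > 0" unfolding t_def using C(1) A0 by simp
    define \<rho> where "\<rho> m = wfun (rad m)" for m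
    have rho_dual: "\<rho> m \<in> L1dual" for m unfolding \<rho>_def by (rule wf_dual[OF rad_meas]) simp
    have rho_bd: "\<bar>\<rho> m f\<bar> \<le> L1norm f" if "f \<in> L1" for m f
      unfolding \<rho>_def by (rule wf_bound[OF rad_meas _ that]) simp
    define \<psi> where "\<psi> m = (\<lambda>x. \<phi> x + t * \<rho> m x)" for m
    have psi_dual: "\<psi> m \<in> L1dual" for m unfolding \<psi>_def by (rule dual_comb[OF p rho_dual])
    have psi_bd: "\<bar>\<psi> m f\<bar> \<le> (C + t) * L1norm f" if f: "f \<in> L1" for m f
    proof -
      have "\<bar>\<psi> m f\<bar> \<le> \<bar>\<phi> f\<bar> + t * \<bar>\<rho> m f\<bar>" unfolding \<psi>_def using t by (simp add: abs_mult abs_triangle_ineq[THEN order_trans])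
      also have "\<dots> \<le> C * L1norm f + t * L1norm f"
        using C(2)[OF f] rho_bd[OF f, of m] t by (intro add_mono mult_left_mono) auto
      finally show ?thesis by (simp add: algebra_simps)
    qed
    define S where "S = 2*C + t"
    have S: "S > 0" unfolding S_def using C(1) t by simp
    define \<epsilon> where "\<epsilon> = d / (3 * S)"
    have eps: "\<epsilon> > 0" unfolding \<epsilon>_def using d S by simp
    have zH: "z \<in> H0" using z unfolding FBL_def by simp
    obtain g where g: "g \<in> fbl_gen" and gz: "fbl_enorm (\<lambda>\<phi>. z \<phi> - g \<phi>) < ereal \<epsilon>"
      using z eps unfolding FBL_def by blast
    have wh: "pos_homogeneous (\<lambda>\<phi>. z \<phi> - g \<phi>)"
      using zH gen_hom[OF g] unfolding H0_def pos_homogeneous_def by (simp add: algebra_simps)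
    have e1: "\<bar>z \<phi> - g \<phi>\<bar> \<le> C * \<epsilon>" using hom_bound[OF wh p C(1) C(2) gz] by simp
    have e2: "\<bar>z (\<psi> m) - g (\<psi> m)\<bar> \<le> (C + t) * \<epsilon>" for m
      using hom_bound[OF wh psi_dual _ psi_bd gz] C t by simp
    obtain X K where X: "finite X" "X \<subseteq> L1" "K \<ge> 0"
      and lip: "\<forall>\<phi>\<in>L1dual. \<forall>\<psi>\<in>L1dual. \<bar>g \<phi> - g \<psi>\<bar> \<le> K * (\<Sum>x\<in>X. \<bar>\<phi> x - \<psi> x\<bar>)"
      using gen_lip[OF g] by blast
    define Q where "Q = t * (1 + K * real (card X))"
    have Q: "Q > 0" unfolding Q_def using t X(3) by (simp add: add_pos_nonneg)
    define \<delta> where "\<delta> = d / (4 * Q)"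
    have del: "\<delta> > 0" unfolding \<delta>_def using d Q by simp
    have ev: "eventually (\<lambda>m. \<forall>x\<in>insert one_fn X. \<bar>\<rho> m x\<bar> < \<delta>) sequentially"
    proof (rule eventually_ball_finite)
      show "finite (insert one_fn X)" using X(1) by simp
      show "\<forall>x\<in>insert one_fn X. eventually (\<lambda>m. \<bar>\<rho> m x\<bar> < \<delta>) sequentially"
      proof
        fix x assume "x \<in> insert one_fn X"
        then have xL: "x \<in> L1" using X(2) one_L1 by auto
        have "eventually (\<lambda>m. dist (I01 (\<lambda>t. x t * rad m t)) 0 < \<delta>) sequentially"
          by (rule tendstoD[OF rad_null[OF xL] del])
        then show "eventually (\<lambda>m. \<bar>\<rho> m x\<bar> < \<delta>) sequentially"
          using xL by (simp add: \<rho>_def wfun_def dist_real_def)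
      qed
    qed
    then obtain m where mX: "\<forall>x\<in>insert one_fn X. \<bar>\<rho> m x\<bar> < \<delta>"
      unfolding eventually_sequentially by blast
    have r1: "\<rho> m (rad m) = 1" unfolding \<rho>_def wfun_def using L1_rad by simp
    have r2: "\<bar>\<phi> (rad m)\<bar> \<le> C" using C(2)[OF L1_rad, of m] by (simp add: L1norm_rad)
    have "t - C \<le> \<bar>\<psi> m (rad m)\<bar>" unfolding \<psi>_def using r1 r2 by simp
    also have "\<dots> \<le> G m (\<psi> m)" using G_ge[of m m "\<psi> m"] psi_dual by (simp add: delta_def)
    finally have Gbig: "t - C \<le> G m (\<psi> m)" .
    have half: "A \<le> (1/2) * G m (\<psi> m)" using Gbig unfolding t_def by simp
    have onev: "A - t * \<delta> \<le> \<bar>\<psi> m one_fn\<bar>"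
    proof -
      have "\<bar>\<rho> m one_fn\<bar> < \<delta>" using mX by simp
      then have "t * \<bar>\<rho> m one_fn\<bar> \<le> t * \<delta>" using t by simp
      then have b: "\<bar>t * \<rho> m one_fn\<bar> \<le> t * \<delta>" using t by (simp add: abs_mult)
      have tri: "\<bar>\<phi> one_fn\<bar> \<le> \<bar>\<phi> one_fn + t * \<rho> m one_fn\<bar> + \<bar>t * \<rho> m one_fn\<bar>"
        using abs_triangle_ineq[of "\<phi> one_fn + t * \<rho> m one_fn" "- (t * \<rho> m one_fn)"] by simp
      show ?thesis unfolding \<psi>_def A_def using b tri by linarith
    qed
    have tdel: "0 \<le> t * \<delta>" using t del by simp
    have h2: "A - t * \<delta> \<le> (1/2) * G m (\<psi> m)" using half tdel by linarith
    have "fN m (\<psi> m) = min \<bar>\<psi> m one_fn\<bar> ((1/2) * G m (\<psi> m))"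
      using psi_dual[of m] by (simp add: fN_def absd_val delta_def)
    then have fv: "A - t * \<delta> \<le> fN m (\<psi> m)" using onev h2 by simp
    have "fN m (\<psi> m) \<le> z (\<psi> m)" using up[of m] psi_dual[of m] unfolding fle_def by blast
    then have zpsi: "A - t * \<delta> \<le> z (\<psi> m)" using fv by linarith
    have sumX: "(\<Sum>x\<in>X. \<bar>\<phi> x - \<psi> m x\<bar>) \<le> real (card X) * (t * \<delta>)"
    proof (rule sum_bounded_above)
      fix x assume "x \<in> X"
      then have "\<bar>\<rho> m x\<bar> < \<delta>" using mX by simp
      then show "\<bar>\<phi> x - \<psi> m x\<bar> \<le> t * \<delta>" unfolding \<psi>_def using t by (simp add: abs_mult)
    qed
    have "\<bar>g \<phi> - g (\<psi> m)\<bar> \<le> K * (\<Sum>x\<in>X. \<bar>\<phi> x - \<psi> m x\<bar>)"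
      using lip p psi_dual[of m] by blast
    also have "\<dots> \<le> K * (real (card X) * (t * \<delta>))" using sumX X(3) by (rule mult_left_mono)
    finally have gl: "\<bar>g \<phi> - g (\<psi> m)\<bar> \<le> K * (real (card X) * (t * \<delta>))" .
    have "t * \<delta> + K * (real (card X) * (t * \<delta>)) = Q * \<delta>" unfolding Q_def by (simp add: algebra_simps)
    also have "\<dots> = d / 4" unfolding \<delta>_def using Q by simp
    finally have eq1: "t * \<delta> + K * (real (card X) * (t * \<delta>)) = d / 4" .
    have "C * \<epsilon> + (C + t) * \<epsilon> = S * \<epsilon>" unfolding S_def by (simp add: algebra_simps)
    also have "\<dots> = d / 3" unfolding \<epsilon>_def using S by simp
    finally have eq2: "C * \<epsilon> + (C + t) * \<epsilon> = d / 3" .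
    have "z \<phi> \<ge> A - d/4 - d/3" using e1 e2[of m] gl zpsi eq1 eq2 by linarith
    moreover have "z \<phi> = A - d" unfolding d_def by simp
    ultimately show False using d by linarith
  qed
qed

theorem theorem4p13:
  shows "\<exists>F y. F \<noteq> {} \<and> F \<subseteq> FBL \<and> (\<forall>x\<in>F. fle (\<lambda>\<phi>. 0) x)
     \<and> (\<forall>a\<in>F. \<forall>b\<in>F. \<exists>c\<in>F. fle a c \<and> fle b c)
     \<and> is_sup_in_FBL F y
     \<and> (SUP x\<in>F. fbl_enorm x) \<noteq> fbl_enorm y"
proof (intro exI[of _ "range fN"] exI[of _ "absd one_fn"] conjI)
  show "range fN \<noteq> {}" by simp
  show "range fN \<subseteq> FBL" using fN_FBL by auto
  show "\<forall>x\<in>range fN. fle (\<lambda>\<phi>. 0) x" unfolding fle_def using fN_nonneg by auto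
  show "\<forall>a\<in>range fN. \<forall>b\<in>range fN. \<exists>c\<in>range fN. fle a c \<and> fle b c"
  proof (intro ballI)
    fix a b assume "a \<in> range fN" "b \<in> range fN"
    then obtain i j where "a = fN i" "b = fN j" by auto
    then show "\<exists>c\<in>range fN. fle a c \<and> fle b c" unfolding fle_def
      by (intro bexI[of _ "fN (max i j)"]) (auto intro: fN_mono)
  qed
  show "is_sup_in_FBL (range fN) (absd one_fn)"
    unfolding is_sup_in_FBL_def
  proof (intro conjI ballI impI)
    show "absd one_fn \<in> FBL" by (rule y_FBL)
    fix x assume "x \<in> range fN"
    then obtain N where "x = fN N" by auto
    then show "fle x (absd one_fn)" unfolding fle_def using fN_le by simp
  next
    fix z assume z: "z \<in> FBL" and up: "\<forall>x\<in>range fN. fle x z"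
    show "fle (absd one_fn) z" by (rule least[OF z]) (use up in blast)
  qed
  have s: "(SUP x\<in>range fN. fbl_enorm x) \<le> ereal (1/2)"
    by (rule SUP_least) (auto intro: fN_norm)
  show "(SUP x\<in>range fN. fbl_enorm x) \<noteq> fbl_enorm (absd one_fn)"
  proof
    assume e: "(SUP x\<in>range fN. fbl_enorm x) = fbl_enorm (absd one_fn)"
    have "ereal 1 \<le> ereal (1/2)" using y_norm_ge s unfolding e[symmetric] by (rule order_trans)
    then show False by simp
  qed
qed

end
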